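(* Let $G\simeq C_2^3$ and let $f$ be an automorphism of $\mathcal{P}_{0}(G)$ with trivial pullback. Then $f$ is the identity.
   Context: For an additively written finite abelian group $G$, $\mathcal{P}_{0}(G)$ is the monoid of all subsets of $G$ containing $0$, with setwise addition and identity $\{0\}$. An automorphism $f$ of $\mathcal{P}_0(G)$ has trivial pullback if $f(\{0,a\})=\{0,a\}$ for all $a\in G$. $C_2$ is the cyclic group of order $2$. *)

theory Defs
  imports Main "HOL-Library.Z2" "HOL-Library.Product_Plus"
begin

definition P0 :: "'a::ab_group_add set set" where
  "P0 = {A. 0 \<in> A}"

definition setadd :: "'a::ab_group_add set \<Rightarrow> 'a set \<Rightarrow> 'a set" where
  "setadd A B = {a + b | a b. a \<in> A \<and> b \<in> B}"

definition P0_aut :: "('a::ab_group_add set \<Rightarrow> 'a set) \<Rightarrow> bool" where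
  "P0_aut f \<longleftrightarrow> bij_betw f P0 P0
     \<and> (\<forall>A\<in>P0. \<forall>B\<in>P0. f (setadd A B) = setadd (f A) (f B))
     \<and> f {0} = {0}"

definition trivial_pullback :: "('a::ab_group_add set \<Rightarrow> 'a set) \<Rightarrow> bool" where
  "trivial_pullback f \<longleftrightarrow> (\<forall>a. f {0, a} = {0, a})"

definition iso_C2_cube :: "('a::ab_group_add \<Rightarrow> bit \<times> bit \<times> bit) \<Rightarrow> bool" where
  "iso_C2_cube \<phi> \<longleftrightarrow> bij \<phi> \<and> (\<forall>x y. \<phi> (x + y) = \<phi> x + \<phi> y)"

end

theory Submission imports Defs begin

lemma setadd_insert: "setadd (insert p P) Q = (\<lambda>q. p + q) ` Q \<union> setadd P Q"
  unfolding setadd_def by blast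
lemma setadd_empty: "setadd {} Q = {}"
  unfolding setadd_def by blast

locale C2c =
  fixes f :: "'a::ab_group_add set \<Rightarrow> 'a set"
  assumes char2: "\<And>x::'a. x + x = 0"
    and finU: "finite (UNIV::'a set)"
    and card8: "card (UNIV::'a set) = 8"
    and aut: "P0_aut f"
    and tp: "trivial_pullback f"
begin

lemma char2b: "x + (x + y) = (y::'a)"
proof -
  have "x + (x + y) = (x + x) + y" by (simp add: add.assoc)
  then show ?thesis by (simp add: char2)
qed

lemmas c2simps = char2 char2b add_ac

lemma mem_pair: "(z::'a) \<in> setadd A {0,a} \<longleftrightarrow> z \<in> A \<or> z + a \<in> A"
proof
  assume "z \<in> setadd A {0,a}"
  then obtain x y where "z = x + y" "x \<in> A" "y \<in> {0,a}" unfolding setadd_def by blast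
  then show "z \<in> A \<or> z + a \<in> A" by (auto simp: add.assoc char2)
next
  assume "z \<in> A \<or> z + a \<in> A"
  then show "z \<in> setadd A {0,a}"
  proof
    assume "z \<in> A"
    moreover have "z = z + 0" by simp
    ultimately show ?thesis unfolding setadd_def by blast
  next
    assume "z + a \<in> A"
    moreover have "z = (z + a) + a" by (simp add: add.assoc char2)
    ultimately show ?thesis unfolding setadd_def by blast
  qed
qed

lemma hom: "0 \<in> A \<Longrightarrow> 0 \<in> B \<Longrightarrow> f (setadd A B) = setadd (f A) (f B)"
  using aut unfolding P0_aut_def P0_def by auto

lemma fP0: "0 \<in> A \<Longrightarrow> 0 \<in> f A"
  using aut unfolding P0_aut_def P0_def bij_betw_def by auto

lemma finj: "0 \<in> A \<Longrightarrow> 0 \<in> B \<Longrightarrow> f A = f B \<Longrightarrow> A = B"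
  using aut unfolding P0_aut_def P0_def bij_betw_def inj_on_def by auto

lemma fsurj: "0 \<in> B \<Longrightarrow> \<exists>A. 0 \<in> A \<and> f A = B"
proof -
  assume "0 \<in> B"
  then have "B \<in> f ` P0" using aut unfolding P0_aut_def bij_betw_def P0_def by simp
  then show ?thesis unfolding P0_def by auto
qed

lemma fpair: "f {0,a} = {0,a}"
  using tp unfolding trivial_pullback_def by auto

lemma hompair: "0 \<in> A \<Longrightarrow> f (setadd A {0,a}) = setadd (f A) {0,a}"
  by (simp add: hom fpair)

lemma setadd_UNIV: "0 \<in> B \<Longrightarrow> setadd UNIV B = UNIV"
  unfolding setadd_def
proof (intro set_eqI iffI)
  fix x assume "0 \<in> B" show "x \<in> {a + b |a b. a \<in> UNIV \<and> b \<in> B}"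
    using \<open>0 \<in> B\<close> by (metis (mono_tags, lifting) UNIV_I add.right_neutral mem_Collect_eq)
qed simp

lemma setadd_sup: "0 \<in> B \<Longrightarrow> A \<subseteq> setadd A B"
  unfolding setadd_def by (metis (mono_tags, lifting) add.right_neutral mem_Collect_eq subsetI)

lemma fUNIV: "f UNIV = UNIV"
proof -
  obtain A where A: "0 \<in> A" "f A = UNIV" using fsurj by blast
  have "f UNIV = f (setadd UNIV A)" using A by (simp add: setadd_UNIV)
  also have "\<dots> = setadd (f UNIV) UNIV" using A by (simp add: hom)
  also have "\<dots> = UNIV"
  proof (intro set_eqI iffI)
    fix z :: 'a
    show "z \<in> setadd (f UNIV) UNIV" unfolding setadd_def using fP0[of UNIV]
      by (intro CollectI exI[of _ 0] exI[of _ z]) simp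
  qed simp
  finally show ?thesis .
qed

lemma exists_out: "finite S \<Longrightarrow> card S < 8 \<Longrightarrow> \<exists>y. y \<notin> (S::'a set)"
proof (rule ccontr)
  assume "finite S" "card S < 8" "\<not> (\<exists>y. y \<notin> S)"
  then have "S = UNIV" by blast
  then show False using card8 \<open>card S < 8\<close> by simp
qed

lemma full: "card (S::'a set) = 8 \<Longrightarrow> S = UNIV"
  by (rule card_subset_eq[OF finU subset_UNIV]) (simp add: card8)

lemma cardcompl: "card (UNIV - S) = 8 - card (S::'a set)"
proof -
  have "finite S" by (rule finite_subset[OF subset_UNIV finU])
  then have "card (UNIV - S) = card (UNIV::'a set) - card S" by (rule card_Diff_subset) simp
  then show ?thesis by (simp only: card8)
qed

lemma setadd_pair: "setadd A {0,a::'a} = A \<union> (\<lambda>s. s + a) ` A"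
proof (rule set_eqI)
  fix z
  have "z + a \<in> A \<longleftrightarrow> z \<in> (\<lambda>s. s + a) ` A"
  proof
    assume "z + a \<in> A" then show "z \<in> (\<lambda>s. s + a) ` A"
      by (rule rev_image_eqI) (simp add: add.assoc char2)
  next
    assume "z \<in> (\<lambda>s. s + a) ` A" then show "z + a \<in> A" by (auto simp: add.assoc char2)
  qed
  then show "z \<in> setadd A {0,a} \<longleftrightarrow> z \<in> A \<union> (\<lambda>s. s + a) ` A" by (simp add: mem_pair)
qed

lemma eq_sum: "(u = v) = (u + v = (0::'a))"
proof -
  have "(u = v) = (u + v = v + v)" by simp
  then show ?thesis by (simp add: char2)
qed
lemma eq_sumL: "z \<noteq> 0 \<Longrightarrow> (x + y = z) = (x + y + z = (0::'a))"
  by (rule eq_sum)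
lemma eq_sumR: "x \<noteq> 0 \<Longrightarrow> (x = y + z) = (y + z + x = (0::'a))"
  by (subst eq_sum) (simp add: add.commute)

lemma neq1: "a \<noteq> b \<Longrightarrow> a + b \<noteq> (0::'a)"
  using eq_sum[of a b] by simp
lemma neq2: "b \<noteq> 0 \<Longrightarrow> a + b \<noteq> (a::'a)"
  by simp
lemma neq3: "a \<noteq> 0 \<Longrightarrow> a + b \<noteq> (b::'a)"
  by simp

lemma S1:
  assumes "a \<noteq> 0" "b \<noteq> 0" "a \<noteq> b"
  shows "f {0,a,b} = {0,a,b} \<or> f {0,a,b} = {0,a,a+b} \<or> f {0,a,b} = {0,b,a+b}"
proof -
  define K where "K = {0,a,b,a+b}"
  have d: "a+b \<noteq> 0" "a+b \<noteq> a" "a+b \<noteq> b" using assms neq1 neq2 neq3 by auto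
  have K: "setadd {0,a} {0,b} = K" unfolding K_def setadd_pair by (auto simp: c2simps)
  have fK: "f K = K" using hom[of "{0,a}" "{0,b}"] K fpair by simp
  have e1: "setadd {0,a,b} {0,a} = K" unfolding K_def setadd_pair by (auto simp: c2simps)
  have e2: "setadd {0,a,b} {0,b} = K" unfolding K_def setadd_pair by (auto simp: c2simps)
  have e3: "setadd {0,a,b} {0,a+b} = K" unfolding K_def setadd_pair by (auto simp: c2simps)
  define B where "B = f {0,a,b}"
  have B0: "0 \<in> B" unfolding B_def by (rule fP0) simp
  have h1: "setadd B {0,a} = K" using e1 hompair[of "{0,a,b}" a] fK B_def by simp
  have h2: "setadd B {0,b} = K" using e2 hompair[of "{0,a,b}" b] fK B_def by simp
  have h3: "setadd B {0,a+b} = K" using e3 hompair[of "{0,a,b}" "a+b"] fK B_def by simp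
  have BK: "B \<subseteq> K" using setadd_sup[of "{0,a}" B] h1 by simp
  have BnK: "B \<noteq> K"
  proof
    assume "B = K"
    then have "f {0,a,b} = f K" using fK B_def by simp
    then have "{0,a,b} = K" by (rule finj[rotated 2]) (auto simp: K_def)
    then show False using d unfolding K_def by auto
  qed
  have c1: "b \<in> B \<or> a + b \<in> B" using h1 mem_pair[of b B a] K_def by (auto simp: c2simps)
  have c2: "a \<in> B \<or> a + b \<in> B" using h2 mem_pair[of a B b] K_def by (auto simp: c2simps)
  have c3: "a \<in> B \<or> b \<in> B" using h3 mem_pair[of a B "a+b"] K_def by (auto simp: c2simps)
  have nall: "\<not> (a \<in> B \<and> b \<in> B \<and> a + b \<in> B)"
    using BK BnK B0 unfolding K_def by blast
  have "B = {0,a,b} \<or> B = {0,a,a+b} \<or> B = {0,b,a+b}"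
  proof (cases "a \<in> B")
    case True
    show ?thesis
    proof (cases "b \<in> B")
      case True
      then have "a + b \<notin> B" using nall \<open>a \<in> B\<close> by blast
      then show ?thesis using BK B0 True \<open>a \<in> B\<close> unfolding K_def by blast
    next
      case False
      then have "a + b \<in> B" using c1 by blast
      then show ?thesis using BK B0 False \<open>a \<in> B\<close> unfolding K_def by blast
    qed
  next
    case False
    then have "b \<in> B" "a + b \<in> B" using c2 c3 by blast+
    then show ?thesis using BK B0 False unfolding K_def by blast
  qed
  then show ?thesis unfolding B_def .
qed



lemma fix3_main:
  assumes a: "a \<noteq> 0" and b: "b \<noteq> 0" and ab: "a \<noteq> b"
  shows "f {0,a,b} = {0,a,b}"
proof -
  have c4: "card {0,a,b,a+b} < 8" by (auto simp: card_insert_if)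
  obtain d where d: "d \<notin> {0,a,b,a+b}"
    using exists_out[OF _ c4] by blast
  have ind: "a \<noteq> 0" "b \<noteq> 0" "d \<noteq> 0" "a + b \<noteq> 0" "a + d \<noteq> 0" "b + d \<noteq> 0" "a + b + d \<noteq> 0"
    using a b ab d by (auto simp: neq1 eq_sumL)
  have E1: "setadd {0,a,b} {0,a+d} = setadd {0,d,a+b+d} {0,a+d}"
    unfolding setadd_pair by (auto simp: c2simps)
  have E2: "setadd {0,a,b} {0,b+d} = setadd {0,d,a+b+d} {0,b+d}"
    unfolding setadd_pair by (auto simp: c2simps)
  define X where "X = f {0,a,b}"
  define Y where "Y = f {0,d,a+b+d}"
  have F1: "setadd X {0,a+d} = setadd Y {0,a+d}"
    using E1 hompair[of "{0,a,b}" "a+d"] hompair[of "{0,d,a+b+d}" "a+d"] X_def Y_def by simp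
  have F2: "setadd X {0,b+d} = setadd Y {0,b+d}"
    using E2 hompair[of "{0,a,b}" "b+d"] hompair[of "{0,d,a+b+d}" "b+d"] X_def Y_def by simp
  have SX: "X = {0,a,b} \<or> X = {0,a,a+b} \<or> X = {0,b,a+b}"
    using S1[OF a b ab] X_def by simp
  have dd: "d + (a+b+d) = a+b" by (simp add: c2simps)
  have p1: "d \<noteq> a+b+d" using ind by (subst eq_sum) (simp add: c2simps)
  have p2: "a+b+d \<noteq> 0" using ind by (simp add: c2simps)
  have SY: "Y = {0,d,a+b+d} \<or> Y = {0,d,a+b} \<or> Y = {0,a+b+d,a+b}"
    using S1[OF ind(3) p2 p1] Y_def dd by simp
  have dist: "0 \<noteq> a" "0 \<noteq> b" "0 \<noteq> d" "0 \<noteq> a+b" "0 \<noteq> a+d" "0 \<noteq> b+d" "0 \<noteq> a+b+d" "a \<noteq> 0" "a \<noteq> b" "a \<noteq> d" "a \<noteq> a+b" "a \<noteq> a+d" "a \<noteq> b+d" "a \<noteq> a+b+d" "b \<noteq> 0" "b \<noteq> a" "b \<noteq> d" "b \<noteq> a+b" "b \<noteq> a+d" "b \<noteq> b+d" "b \<noteq> a+b+d" "d \<noteq> 0" "d \<noteq> a" "d \<noteq> b" "d \<noteq> a+b" "d \<noteq> a+d" "d \<noteq> b+d" "d \<noteq> a+b+d" "a+b \<noteq> 0" "a+b \<noteq> a" "a+b \<noteq> b" "a+b \<noteq> d" "a+b \<noteq> a+d" "a+b \<noteq> b+d" "a+b \<noteq> a+b+d" "a+d \<noteq> 0" "a+d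 \<noteq> a" "a+d \<noteq> b" "a+d \<noteq> d" "a+d \<noteq> a+b" "a+d \<noteq> b+d" "a+d \<noteq> a+b+d" "b+d \<noteq> 0" "b+d \<noteq> a" "b+d \<noteq> b" "b+d \<noteq> d" "b+d \<noteq> a+b" "b+d \<noteq> a+d" "b+d \<noteq> a+b+d" "a+b+d \<noteq> 0" "a+b+d \<noteq> a" "a+b+d \<noteq> b" "a+b+d \<noteq> d" "a+b+d \<noteq> a+b" "a+b+d \<noteq> a+d" "a+b+d \<noteq> b+d"
    using ind by (subst eq_sum, simp add: c2simps)+
  have M1: "(w \<in> X \<or> w + (a+d) \<in> X) \<longleftrightarrow> (w \<in> Y \<or> w + (a+d) \<in> Y)" for w
    using F1 mem_pair[of w X "a+d"] mem_pair[of w Y "a+d"] by simp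
  have M2: "(w \<in> X \<or> w + (b+d) \<in> X) \<longleftrightarrow> (w \<in> Y \<or> w + (b+d) \<in> Y)" for w
    using F2 mem_pair[of w X "b+d"] mem_pair[of w Y "b+d"] by simp
  show ?thesis
  proof (rule ccontr)
    assume "f {0,a,b} \<noteq> {0,a,b}"
    then have SX': "X = {0,a,a+b} \<or> X = {0,b,a+b}" using SX X_def by simp
    then show False
    proof
      assume X1: "X = {0,a,a+b}"
      show False using SY
      proof (elim disjE)
        assume "Y = {0,d,a+b+d}" then show False using M1[of "a+b"] X1 dist by (simp add: c2simps)
      next
        assume "Y = {0,d,a+b}" then show False using M2[of "a"] X1 dist by (simp add: c2simps)
      next
        assume "Y = {0,a+b+d,a+b}" then show False using M1[of "a"] X1 dist by (simp add: c2simps)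
      qed
    next
      assume X2: "X = {0,b,a+b}"
      show False using SY
      proof (elim disjE)
        assume "Y = {0,d,a+b+d}" then show False using M1[of "a+b"] X2 dist by (simp add: c2simps)
      next
        assume "Y = {0,d,a+b}" then show False using M1[of "a+b+d"] X2 dist by (simp add: c2simps)
      next
        assume "Y = {0,a+b+d,a+b}" then show False using M2[of "d"] X2 dist by (simp add: c2simps)
      qed
    qed
  qed
qed

lemma dist8:
  assumes "p \<noteq> 0" "q \<noteq> 0" "r \<noteq> 0" "p + q \<noteq> 0" "p + r \<noteq> 0" "q + r \<noteq> 0" "p + q + r \<noteq> (0::'a)"
  shows "0 \<noteq> p"
    and "0 \<noteq> q"
    and "0 \<noteq> r"
    and "0 \<noteq> p+q"
    and "0 \<noteq> p+r"
    and "0 \<noteq> q+r"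
    and "0 \<noteq> p+q+r"
    and "p \<noteq> 0"
    and "p \<noteq> q"
    and "p \<noteq> r"
    and "p \<noteq> p+q"
    and "p \<noteq> p+r"
    and "p \<noteq> q+r"
    and "p \<noteq> p+q+r"
    and "q \<noteq> 0"
    and "q \<noteq> p"
    and "q \<noteq> r"
    and "q \<noteq> p+q"
    and "q \<noteq> p+r"
    and "q \<noteq> q+r"
    and "q \<noteq> p+q+r"
    and "r \<noteq> 0"
    and "r \<noteq> p"
    and "r \<noteq> q"
    and "r \<noteq> p+q"
    and "r \<noteq> p+r"
    and "r \<noteq> q+r"
    and "r \<noteq> p+q+r"
    and "p+q \<noteq> 0"
    and "p+q \<noteq> p"
    and "p+q \<noteq> q"
    and "p+q \<noteq> r"
    and "p+q \<noteq> p+r"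
    and "p+q \<noteq> q+r"
    and "p+q \<noteq> p+q+r"
    and "p+r \<noteq> 0"
    and "p+r \<noteq> p"
    and "p+r \<noteq> q"
    and "p+r \<noteq> r"
    and "p+r \<noteq> p+q"
    and "p+r \<noteq> q+r"
    and "p+r \<noteq> p+q+r"
    and "q+r \<noteq> 0"
    and "q+r \<noteq> p"
    and "q+r \<noteq> q"
    and "q+r \<noteq> r"
    and "q+r \<noteq> p+q"
    and "q+r \<noteq> p+r"
    and "q+r \<noteq> p+q+r"
    and "p+q+r \<noteq> 0"
    and "p+q+r \<noteq> p"
    and "p+q+r \<noteq> q"
    and "p+q+r \<noteq> r"
    and "p+q+r \<noteq> p+q"
    and "p+q+r \<noteq> p+r"
    and "p+q+r \<noteq> q+r"
  using assms by (subst eq_sum, simp add: c2simps)+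

lemma fix3: "f {0,a,b} = {0,a,b}"
proof -
  consider "a = 0" | "b = 0" | "a = b" | "a \<noteq> 0" "b \<noteq> 0" "a \<noteq> b" by blast
  then show ?thesis
  proof cases
    case 1 then show ?thesis using fpair[of b] by (simp add: insert_commute)
  next
    case 2 then show ?thesis using fpair[of a] by (simp add: insert_commute)
  next
    case 3 then show ?thesis using fpair[of a] by simp
  next
    case 4 then show ?thesis by (rule fix3_main)
  qed
qed

lemma card_lt8: "card {p,q,r,s,t,u::'a} < 8"
proof -
  have "card {p,q,r,s,t,u} \<le> 6" by (auto simp: card_insert_if)
  then show ?thesis by simp
qed

lemma L7:
  assumes x: "x \<noteq> 0"
  shows "f (UNIV - {x}) = UNIV - {x}"
proof -
  obtain a where a: "a \<notin> {0,x,0,x,0,x}" using exists_out[OF _ card_lt8] by blast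
  obtain b where b: "b \<notin> {0,x,a,x+a,0,x}" using exists_out[OF _ card_lt8] by blast
  have i: "a \<noteq> 0" "b \<noteq> 0" "x \<noteq> 0" "a + b \<noteq> 0" "a + x \<noteq> 0" "b + x \<noteq> 0" "a + b + x \<noteq> 0"
    using a b x by (auto simp: eq_sum[symmetric])
  note D = dist8[OF i]
  define S where "S = setadd {0,a,b} {0,x+a+b,a+b}"
  have S: "S = {0,x+a+b,a+b,a,x+b,b,x+a}"
    unfolding S_def setadd_insert setadd_empty by (auto simp: c2simps)
  have sub: "S \<subseteq> UNIV - {x}" unfolding S using D by (auto simp: c2simps)
  have cS: "card S = 7" unfolding S using D by (simp add: c2simps)
  have cU: "card (UNIV - {x}) = 7" using cardcompl[of "{x}"] by simp
  have eq: "S = UNIV - {x}"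
    by (rule card_subset_eq[OF _ sub]) (use cS cU finU in auto)
  have "f S = setadd (f {0,a,b}) (f {0,x+a+b,a+b})" unfolding S_def by (rule hom) auto
  also have "\<dots> = S" unfolding S_def fix3 ..
  finally show ?thesis using eq by simp
qed


lemma L6:
  assumes x: "x \<noteq> 0" and y: "y \<noteq> 0" and xy: "x \<noteq> y"
  shows "f (UNIV - {x,y}) = UNIV - {x,y}"
proof -
  obtain u where u: "u \<notin> {0,x,y,x+y,0,x}" using exists_out[OF _ card_lt8] by blast
  have i: "x \<noteq> 0" "y \<noteq> 0" "u \<noteq> 0" "x + y \<noteq> 0" "x + u \<noteq> 0" "y + u \<noteq> 0" "x + y + u \<noteq> 0"
    using u x y xy by (auto simp: eq_sum[symmetric])
  note D = dist8[OF i]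
  define S where "S = setadd {0,u,x+u} {0,x+y}"
  have S: "S = {0,x+y,u,u+x+y,x+u,y+u}"
    unfolding S_def setadd_insert setadd_empty by (auto simp: c2simps)
  have sub: "S \<subseteq> UNIV - {x,y}" unfolding S using D by (auto simp: c2simps)
  have cS: "card S = 6" unfolding S using D by (simp add: c2simps)
  have cU: "card (UNIV - {x,y}) = 6" using cardcompl[of "{x,y}"] xy by simp
  have eq: "S = UNIV - {x,y}"
    by (rule card_subset_eq[OF _ sub]) (use cS cU finU in auto)
  have "f S = setadd (f {0,u,x+u}) (f {0,x+y})" unfolding S_def by (rule hom) auto
  also have "\<dots> = S" unfolding S_def fix3 fpair ..
  finally show ?thesis using eq by simp
qed

lemma L8:
  assumes "(x::'a) \<noteq> 0" "y \<noteq> 0" "z \<noteq> 0" "x + y \<noteq> 0" "x + z \<noteq> 0" "y + z \<noteq> 0" "x + y + z \<noteq> 0"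
  shows "UNIV = {0,x+y,x+z,y+z,x,y,z,x+y+z}"
proof -
  note D = dist8[OF assms]
  have "card {0,x+y,x+z,y+z,x,y,z,x+y+z} = 8" using D by simp
  then show ?thesis using full by metis
qed


lemma complcard_less:
  assumes "A \<subseteq> B" "A \<noteq> B"
  shows "card (UNIV - B) < card (UNIV - (A::'a set))"
proof (rule psubset_card_mono)
  show "finite (UNIV - A)" using finU by simp
  show "UNIV - B \<subset> UNIV - A" using assms by blast
qed

lemma main: "0 \<in> A \<Longrightarrow> f A = A"
proof (induction A rule: measure_induct_rule[where f="\<lambda>A. card (UNIV - A)"])
  case (less A)
  note IH = less.IH
  show ?case
  proof (cases "A = UNIV")
    case True then show ?thesis using fUNIV by simp
  next
    case nU: False
    show ?thesis
    proof (cases "\<forall>x. x \<notin> A \<longrightarrow> (\<exists>a. setadd A {0,a} \<noteq> A \<and> x \<notin> setadd A {0,a})")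
      case True
      have up: "setadd (f A) {0,a} = setadd A {0,a}" if ne: "setadd A {0,a} \<noteq> A" for a
      proof -
        have sub: "A \<subseteq> setadd A {0,a}" by (rule setadd_sup) simp
        have "card (UNIV - setadd A {0,a}) < card (UNIV - A)"
          using complcard_less[OF sub] ne by metis
        moreover have "0 \<in> setadd A {0,a}" using sub less.prems by blast
        ultimately have "f (setadd A {0,a}) = setadd A {0,a}" using IH by blast
        then show ?thesis using hompair[OF less.prems] by simp
      qed
      have BA: "f A \<subseteq> A"
      proof
        fix y assume y: "y \<in> f A"
        show "y \<in> A"
        proof (rule ccontr)
          assume "y \<notin> A"
          then obtain a where a: "setadd A {0,a} \<noteq> A" "y \<notin> setadd A {0,a}" using True by blast
          have "y \<in> setadd (f A) {0,a}" using y setadd_sup[of "{0,a}" "f A"] by blast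
          then show False using up[OF a(1)] a(2) by simp
        qed
      qed
      have AB: "A \<subseteq> f A"
      proof
        fix y assume y: "y \<in> A"
        show "y \<in> f A"
        proof (rule ccontr)
          assume ny: "y \<notin> f A"
          have all: "y + a \<in> A" for a
          proof (cases "setadd A {0,a} = A")
            case True
            have "(y + a) + a \<in> A" using y by (simp add: add.assoc char2)
            then have "y + a \<in> setadd A {0,a}" unfolding mem_pair by blast
            then show ?thesis using True by simp
          next
            case False
            have "y \<in> setadd A {0,a}" using y setadd_sup[of "{0,a}" A] by blast
            then have "y \<in> setadd (f A) {0,a}" using up[OF False] by simp
            then have "y + a \<in> f A" using ny unfolding mem_pair by blast
            then show ?thesis using BA by blast
          qed
          have "z \<in> A" for z using all[of "y + z"] by (simp add: char2b)
          then show False using nU by blast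
        qed
      qed
      show ?thesis using AB BA by blast
    next
      case False
      then obtain x where xA: "x \<notin> A" and H: "\<And>a. setadd A {0,a} \<noteq> A \<Longrightarrow> x \<in> setadd A {0,a}"
        by blast
      have x0: "x \<noteq> 0" using xA less.prems by blast
      have stab: "w + (x + y) \<in> A" if yA: "y \<notin> A" and wA: "w \<in> A" for y w
      proof -
        have "setadd A {0, x + y} = A"
        proof (rule ccontr)
          assume "setadd A {0, x + y} \<noteq> A"
          then have "x \<in> setadd A {0, x+y}" by (rule H)
          then show False using xA yA unfolding mem_pair by (simp add: char2b add.assoc[symmetric] char2)
        qed
        moreover have "w + (x + y) \<in> setadd A {0, x+y}" unfolding mem_pair
          using wA by (simp add: add.assoc char2)
        ultimately show ?thesis by simp
      qed
      show ?thesis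
      proof (cases "UNIV - A = {x}")
        case True
        then have "A = UNIV - {x}" by blast
        then show ?thesis using L7[OF x0] by simp
      next
        case False
        then obtain y where yA: "y \<notin> A" and yx: "y \<noteq> x" using xA by blast
        have y0: "y \<noteq> 0" using yA less.prems by blast
        show ?thesis
        proof (cases "UNIV - A = {x,y}")
          case True
          then have "A = UNIV - {x,y}" by blast
          then show ?thesis using L6[OF x0 y0 yx[symmetric]] by simp
        next
          case False
          then obtain z where zA: "z \<notin> A" and zx: "z \<noteq> x" and zy: "z \<noteq> y" using xA yA by blast
          have z0: "z \<noteq> 0" using zA less.prems by blast
          have m1: "x + y \<in> A" using stab[OF yA less.prems] by simp
          have m2: "x + z \<in> A" using stab[OF zA less.prems] by simp
          have m3: "y + z \<in> A" using stab[OF zA m1] by (simp add: c2simps)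
          have n4: "x + y + z \<notin> A"
          proof
            assume "x + y + z \<in> A"
            then have "x + y + z + (x + y) \<in> A" using stab[OF yA] by blast
            then show False using zA by (simp add: c2simps)
          qed
          have i: "x + y \<noteq> 0" "x + z \<noteq> 0" "y + z \<noteq> 0" "x + y + z \<noteq> 0"
            using yx zx zy n4 less.prems by (auto simp: eq_sum[symmetric] char2)
          have U: "UNIV = {0,x+y,x+z,y+z,x,y,z,x+y+z}" by (rule L8) (use x0 y0 z0 i in auto)
          have "A = {0,x+y,x+z,y+z}"
          proof
            show "{0,x+y,x+z,y+z} \<subseteq> A" using less.prems m1 m2 m3 by blast
            show "A \<subseteq> {0,x+y,x+z,y+z}"
            proof
              fix w assume "w \<in> A"
              moreover have "w \<in> {0,x+y,x+z,y+z,x,y,z,x+y+z}" using U by blast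
              ultimately show "w \<in> {0,x+y,x+z,y+z}" using xA yA zA n4 by blast
            qed
          qed
          moreover have "setadd {0,x+y} {0,x+z} = {0,x+y,x+z,y+z}"
            unfolding setadd_pair by (auto simp: c2simps)
          moreover have "f (setadd {0,x+y} {0,x+z}) = setadd {0,x+y} {0,x+z}"
            using hom[of "{0,x+y}" "{0,x+z}"] fpair by simp
          ultimately show ?thesis by simp
        qed
      qed
    qed
  qed
qed

end

lemma bit_UNIV: "(UNIV::bit set) = {0,1}"
  using bit_not_zero_iff by auto

lemma bit_add_self: "(b::bit) + b = 0"
proof -
  have "b = 0 \<or> b = 1" using bit_not_zero_iff by blast
  then show ?thesis by auto
qed

lemma B3_add_self: "(p::bit \<times> bit \<times> bit) + p = 0"
  by (cases p) (simp add: bit_add_self zero_prod_def)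

lemma B3_card: "card (UNIV::(bit \<times> bit \<times> bit) set) = 8"
proof -
  have c: "card (UNIV::bit set) = 2" by (simp add: bit_UNIV)
  have "card (UNIV \<times> (UNIV \<times> UNIV) :: (bit \<times> bit \<times> bit) set) = 8"
    by (simp only: card_cartesian_product c)
  then show ?thesis by simp
qed

lemma B3_finite: "finite (UNIV::(bit \<times> bit \<times> bit) set)"
proof -
  have f: "finite (UNIV::bit set)" by (simp add: bit_UNIV)
  have "finite (UNIV \<times> (UNIV \<times> UNIV) :: (bit \<times> bit \<times> bit) set)"
    by (intro finite_cartesian_product f)
  then show ?thesis by simp
qed

theorem lemma3p5:
  fixes f :: "'a::ab_group_add set \<Rightarrow> 'a set"
    and \<phi> :: "'a \<Rightarrow> bit \<times> bit \<times> bit"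
  assumes "iso_C2_cube \<phi>"
    and "P0_aut f"
    and "trivial_pullback f"
  shows "\<forall>A\<in>P0. f A = A"
proof -
  have bij: "bij \<phi>" and hom: "\<And>x y. \<phi> (x + y) = \<phi> x + \<phi> y"
    using assms(1) unfolding iso_C2_cube_def by auto
  have inj: "inj \<phi>" using bij bij_is_inj by blast
  have phi0: "\<phi> 0 = 0"
  proof -
    have "\<phi> 0 = \<phi> 0 + \<phi> 0" using hom[of 0 0] by simp
    then show ?thesis by simp
  qed
  have c2: "x + x = 0" for x :: 'a
  proof -
    have "\<phi> (x + x) = \<phi> 0" using hom[of x x] phi0 B3_add_self by simp
    then show ?thesis using inj by (simp add: inj_eq)
  qed
  have fin: "finite (UNIV::'a set)"
    using bij_betw_finite[OF bij] B3_finite by simp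
  have card: "card (UNIV::'a set) = 8"
    using bij_betw_same_card[OF bij] B3_card by simp
  interpret C2c f
    by (unfold_locales) (use c2 fin card assms in auto)
  show ?thesis using main unfolding P0_def by blast
qed

end
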